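(* Let $\alpha$ be a divergence, $E$ and $F$ Polish spaces, and $\mu,\nu\in\mathcal P(E)$ with $\nu\ll\mu$. Suppose a measurable map $T:E\to F$ is sufficient for $\{\mu,\nu\}$, meaning that $d\nu/d\mu$ (has a version that) is $\sigma(T)$-measurable. Then $\alpha(\nu\circ T^{-1}\,|\,\mu\circ T^{-1})=\alpha(\nu|\mu)$. In particular this holds if $T$ is a bijection with measurable inverse.
   Context: For a Polish space $E$, $\mathcal P(E)$ is the set of Borel probability measures on $E$. A kernel from $E$ to $F$ is a measurable map $E\ni x\mapsto K_x\in\mathcal P(F)$, and $\mu K:=\int_E\mu(dx)K_x(\cdot)\in\mathcal P(F)$. A divergence is a family of functions $\mathcal P(E)\ni\nu\mapsto\alpha(\nu|\mu)\in[0,\infty]$, one for each Polish space $E$ and each $\mu\in\mathcal P(E)$, each convex and lower semicontinuous with respect to total variation, such that: (1) $\alpha(\mu|\mu)=0$; (2) $\alpha(\nu|\mu)=\infty$ if $\nu$ is not absolutely continuous with respect to $\mu$; (3) $\alpha(\nu K|\mu K)\le\alpha(\nu|\mu)$ for all Polish $E,F$, all $\mu,\nu\in\mathcal P(E)$ and every kernel $K$ from $E$ to $F$. *)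

theory Defs
  imports "HOL-Probability.Probability"
begin

definition prob_measures :: "'a::topological_space measure set" where
  "prob_measures = {M. sets M = sets (borel :: 'a measure) \<and> prob_space M}"

definition mix_measure :: "real \<Rightarrow> 'a::topological_space measure \<Rightarrow> 'a measure \<Rightarrow> 'a measure" where
  "mix_measure t M N = measure_of (space (borel :: 'a measure)) (sets (borel :: 'a measure))
     (\<lambda>A. ennreal t * emeasure M A + ennreal (1 - t) * emeasure N A)"

definition tv_dist :: "'a::topological_space measure \<Rightarrow> 'a measure \<Rightarrow> real" where
  "tv_dist M N = (SUP A \<in> sets (borel :: 'a measure). \<bar>measure M A - measure N A\<bar>)"

definition kernels :: "('a::topological_space \<Rightarrow> 'b::topological_space measure) set" where
  "kernels = borel \<rightarrow>\<^sub>M prob_algebra borel"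

text \<open>Per-space part of the definition of a divergence: alpha nu mu stands for alpha(nu|mu),
  defined for mu, nu in P(E).\<close>
definition divergence_on :: "('a::topological_space measure \<Rightarrow> 'a measure \<Rightarrow> ennreal) \<Rightarrow> bool" where
  "divergence_on \<alpha> \<longleftrightarrow>
     (\<forall>\<mu>\<in>prob_measures.
        \<comment> \<open>convexity in the first argument\<close>
        (\<forall>\<nu>1\<in>prob_measures. \<forall>\<nu>2\<in>prob_measures. \<forall>t::real. 0 \<le> t \<and> t \<le> 1 \<longrightarrow>
           \<alpha> (mix_measure t \<nu>1 \<nu>2) \<mu> \<le> ennreal t * \<alpha> \<nu>1 \<mu> + ennreal (1 - t) * \<alpha> \<nu>2 \<mu>) \<and>
        \<comment> \<open>lower semicontinuity w.r.t. total variation (TV is a metric, so sequential)\<close>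
        (\<forall>\<nu>\<in>prob_measures. \<forall>\<nu>s. (\<forall>n. \<nu>s n \<in> prob_measures) \<longrightarrow>
           (\<lambda>n. tv_dist (\<nu>s n) \<nu>) \<longlonglongrightarrow> 0 \<longrightarrow> \<alpha> \<nu> \<mu> \<le> liminf (\<lambda>n. \<alpha> (\<nu>s n) \<mu>)) \<and>
        \<comment> \<open>(1)\<close>
        \<alpha> \<mu> \<mu> = 0 \<and>
        \<comment> \<open>(2)\<close>
        (\<forall>\<nu>\<in>prob_measures. \<not> absolutely_continuous \<mu> \<nu> \<longrightarrow> \<alpha> \<nu> \<mu> = \<infinity>))"

definition data_processing ::
  "('a::topological_space measure \<Rightarrow> 'a measure \<Rightarrow> ennreal) \<Rightarrow>
   ('b::topological_space measure \<Rightarrow> 'b measure \<Rightarrow> ennreal) \<Rightarrow> bool" where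
  "data_processing \<alpha> \<beta> \<longleftrightarrow>
     (\<forall>\<mu>\<in>prob_measures. \<forall>\<nu>\<in>prob_measures. \<forall>K\<in>(kernels :: ('a \<Rightarrow> 'b measure) set).
        \<beta> (\<nu> \<bind> K) (\<mu> \<bind> K) \<le> \<alpha> \<nu> \<mu>)"

text \<open>A divergence restricted to the two Polish spaces E ('e) and F ('f).\<close>
definition divergence_pair ::
  "('e::polish_space measure \<Rightarrow> 'e measure \<Rightarrow> ennreal) \<Rightarrow>
   ('f::polish_space measure \<Rightarrow> 'f measure \<Rightarrow> ennreal) \<Rightarrow> bool" where
  "divergence_pair \<alpha>E \<alpha>F \<longleftrightarrow>
     divergence_on \<alpha>E \<and> divergence_on \<alpha>F \<and>
     data_processing \<alpha>E \<alpha>E \<and> data_processing \<alpha>E \<alpha>F \<and>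
     data_processing \<alpha>F \<alpha>E \<and> data_processing \<alpha>F \<alpha>F"

definition sufficient_for :: "('e::topological_space \<Rightarrow> 'f::topological_space) \<Rightarrow> 'e measure \<Rightarrow> 'e measure \<Rightarrow> bool" where
  "sufficient_for T \<mu> \<nu> \<longleftrightarrow>
     (\<exists>h \<in> borel_measurable (vimage_algebra UNIV T (borel :: 'f measure)).
        AE x in \<mu>. RN_deriv \<mu> \<nu> x = h x)"

end

theory Submission
  imports Defs
begin


lemma cell_bound:
  fixes M :: "'a measure" and fr :: "'a \<Rightarrow> real"
  assumes "prob_space M" "A \<in> sets M" "X \<in> sets M" "integrable M fr"
  shows "\<bar>(\<integral>x. indicator (A\<inter>X) x * fr x \<partial>M) - (\<integral>x. indicator A x * fr x \<partial>M) * measure M (A\<inter>X) / measure M A\<bar>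
         \<le> 2 * (\<integral>x. indicator A x * \<bar>fr x - c\<bar> \<partial>M)"
proof -
  interpret prob_space M by fact
  have AX: "A \<inter> X \<in> sets M" using assms by auto
  have i1: "integrable M (\<lambda>x. indicator S x * fr x)" if "S \<in> sets M" for S
    using integrable_mult_indicator[OF that assms(4)] by simp
  have i2: "integrable M (\<lambda>x. indicator S x * (fr x - c))" if "S \<in> sets M" for S
    using integrable_mult_indicator[OF that, of "\<lambda>x. fr x - c"] assms(4) by simp
  have i3: "integrable M (\<lambda>x. indicator S x * \<bar>fr x - c\<bar>)" if "S \<in> sets M" for S
    using integrable_mult_indicator[OF that, of "\<lambda>x. \<bar>fr x - c\<bar>"] assms(4) by simp
  have lin: "(\<integral>x. indicator S x * fr x \<partial>M) = (\<integral>x. indicator S x * (fr x - c) \<partial>M) + c * measure M S"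
    if "S \<in> sets M" for S
  proof -
    have "(\<integral>x. indicator S x * fr x \<partial>M) = (\<integral>x. indicator S x * (fr x - c) + c * indicator S x \<partial>M)"
      by (rule Bochner_Integration.integral_cong) (auto simp: algebra_simps)
    also have "\<dots> = (\<integral>x. indicator S x * (fr x - c) \<partial>M) + (\<integral>x. c * indicator S x \<partial>M)"
      by (rule Bochner_Integration.integral_add) (use i2[OF that] that in \<open>auto intro!: integrable_real_indicator simp: emeasure_eq_measure\<close>)
    also have "(\<integral>x. c * indicator S x \<partial>M) = c * measure M S" using that by simp
    finally show ?thesis .
  qed
  have absb: "\<bar>\<integral>x. indicator S x * (fr x - c) \<partial>M\<bar> \<le> (\<integral>x. indicator S x * \<bar>fr x - c\<bar> \<partial>M)"
    if "S \<in> sets M" for S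
  proof -
    have "\<bar>\<integral>x. indicator S x * (fr x - c) \<partial>M\<bar> \<le> (\<integral>x. \<bar>indicator S x * (fr x - c)\<bar> \<partial>M)"
      by (rule integral_abs_bound)
    also have "\<dots> = (\<integral>x. indicator S x * \<bar>fr x - c\<bar> \<partial>M)"
      by (rule Bochner_Integration.integral_cong) (auto simp: abs_mult split: split_indicator)
    finally show ?thesis .
  qed
  define J where "J = (\<integral>x. indicator A x * \<bar>fr x - c\<bar> \<partial>M)"
  have J1: "(\<integral>x. indicator (A\<inter>X) x * \<bar>fr x - c\<bar> \<partial>M) \<le> J"
    unfolding J_def using AX assms(2)
    by (intro integral_mono i3) (auto split: split_indicator)
  define I1 where "I1 = (\<integral>x. indicator (A\<inter>X) x * (fr x - c) \<partial>M)"
  define I2 where "I2 = (\<integral>x. indicator A x * (fr x - c) \<partial>M)"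
  have hI1: "\<bar>I1\<bar> \<le> J" using absb[OF AX] J1 unfolding I1_def by linarith
  have hI2: "\<bar>I2\<bar> \<le> J" using absb[OF assms(2)] unfolding I2_def J_def by linarith
  define m where "m = measure M (A \<inter> X)"
  define a where "a = measure M A"
  have ma: "m \<le> a" "0 \<le> m" unfolding m_def a_def using assms by (auto intro!: finite_measure_mono)
  have J0: "0 \<le> J" using hI1 by linarith
  show ?thesis
    unfolding lin[OF AX] lin[OF assms(2)] I1_def[symmetric] I2_def[symmetric] m_def[symmetric] a_def[symmetric]
    J_def[symmetric]
  proof (cases "a = 0")
    case True
    then have "m = 0" using ma by simp
    then show "\<bar>I1 + c * m - (I2 + c * a) * m / a\<bar> \<le> 2 * J" using hI1 J0 by simp
  next
    case False
    then have apos: "a > 0" using ma by simp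
    have eq: "I1 + c * m - (I2 + c * a) * m / a = I1 - I2 * (m / a)"
      using apos by (simp add: field_simps)
    have q: "0 \<le> m / a" "m / a \<le> 1" using ma apos by auto
    have "\<bar>I2 * (m / a)\<bar> = \<bar>I2\<bar> * (m / a)" using ma apos by (simp add: abs_mult)
    also have "\<dots> \<le> J * 1" by (rule mult_mono) (use hI2 q J0 in auto)
    finally have "\<bar>I2 * (m / a)\<bar> \<le> J" by simp
    then show "\<bar>I1 + c * m - (I2 + c * a) * m / a\<bar> \<le> 2 * J" unfolding eq using hI1 by linarith
  qed
qed

lemma sum_level:
  fixes s :: "'a \<Rightarrow> 'c" and w :: "'c \<Rightarrow> 'b::comm_monoid_add"
  assumes "finite R" "s x \<in> R"
  shows "(\<Sum>c\<in>R. (if s x = c then w c else 0)) = w (s x)"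
  using assms by (simp add: sum.delta)

lemma tv_bound:
  fixes M :: "'a measure" and fr s :: "'a \<Rightarrow> real"
  assumes "prob_space M" "integrable M fr" "finite (s ` space M)"
    and L: "\<And>c. s -` {c} \<inter> space M \<in> sets M" and X: "X \<in> sets M"
  shows "\<bar>(\<integral>x. indicator X x * fr x \<partial>M) -
          (\<Sum>c\<in>s ` space M. (\<integral>x. indicator (s -` {c} \<inter> space M) x * fr x \<partial>M)
              * measure M ((s -` {c} \<inter> space M) \<inter> X) / measure M (s -` {c} \<inter> space M))\<bar>
         \<le> 2 * (\<integral>x. \<bar>fr x - s x\<bar> \<partial>M)"
proof -
  interpret prob_space M by fact
  define R where "R = s ` space M"
  define L where "L c = s -` {c} \<inter> space M" for c
  have fR: "finite R" using assms(3) R_def by simp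
  have Ls: "L c \<in> sets M" for c using L L_def by simp
  have ind: "indicator (L c) x = (if s x = c then 1 else (0::real))" if "x \<in> space M" for x c
    using that by (auto simp: L_def split: split_indicator)
  have indX: "indicator (L c \<inter> X) x = (if s x = c then indicator X x else (0::real))" if "x \<in> space M" for x c
    using that by (auto simp: L_def split: split_indicator)
  have i1: "integrable M (\<lambda>x. indicator S x * fr x)" if "S \<in> sets M" for S
    using integrable_mult_indicator[OF that assms(2)] by simp
  have i3: "integrable M (\<lambda>x. indicator S x * \<bar>fr x - c\<bar>)" if "S \<in> sets M" for S c
    using integrable_mult_indicator[OF that, of "\<lambda>x. \<bar>fr x - c\<bar>"] assms(2) by simp
  have e1: "(\<integral>x. indicator X x * fr x \<partial>M) = (\<Sum>c\<in>R. \<integral>x. indicator (L c \<inter> X) x * fr x \<partial>M)"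
  proof -
    have "(\<integral>x. indicator X x * fr x \<partial>M) = (\<integral>x. (\<Sum>c\<in>R. indicator (L c \<inter> X) x * fr x) \<partial>M)"
    proof (rule Bochner_Integration.integral_cong[OF refl])
      fix x assume x: "x \<in> space M"
      have "(\<Sum>c\<in>R. indicator (L c \<inter> X) x * fr x) = (\<Sum>c\<in>R. (if s x = c then indicator X x * fr x else 0))"
        by (rule sum.cong) (auto simp: indX[OF x])
      also have "\<dots> = indicator X x * fr x" using sum_level[OF fR, of s x "\<lambda>_. indicator X x * fr x"] x R_def by simp
      finally show "indicator X x * fr x = (\<Sum>c\<in>R. indicator (L c \<inter> X) x * fr x)" by simp
    qed
    also have "\<dots> = (\<Sum>c\<in>R. \<integral>x. indicator (L c \<inter> X) x * fr x \<partial>M)"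
      by (rule Bochner_Integration.integral_sum) (use i1 Ls X in auto)
    finally show ?thesis .
  qed
  have e2: "(\<integral>x. \<bar>fr x - s x\<bar> \<partial>M) = (\<Sum>c\<in>R. \<integral>x. indicator (L c) x * \<bar>fr x - c\<bar> \<partial>M)"
  proof -
    have "(\<integral>x. \<bar>fr x - s x\<bar> \<partial>M) = (\<integral>x. (\<Sum>c\<in>R. indicator (L c) x * \<bar>fr x - c\<bar>) \<partial>M)"
    proof (rule Bochner_Integration.integral_cong[OF refl])
      fix x assume x: "x \<in> space M"
      have "(\<Sum>c\<in>R. indicator (L c) x * \<bar>fr x - c\<bar>) = (\<Sum>c\<in>R. (if s x = c then \<bar>fr x - c\<bar> else 0))"
        by (rule sum.cong) (auto simp: ind[OF x])
      also have "\<dots> = \<bar>fr x - s x\<bar>" using sum_level[OF fR, of s x "\<lambda>c. \<bar>fr x - c\<bar>"] x R_def by simp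
      finally show "\<bar>fr x - s x\<bar> = (\<Sum>c\<in>R. indicator (L c) x * \<bar>fr x - c\<bar>)" by simp
    qed
    also have "\<dots> = (\<Sum>c\<in>R. \<integral>x. indicator (L c) x * \<bar>fr x - c\<bar> \<partial>M)"
      by (rule Bochner_Integration.integral_sum) (use i3 Ls in auto)
    finally show ?thesis .
  qed
  have "\<bar>(\<Sum>c\<in>R. \<integral>x. indicator (L c \<inter> X) x * fr x \<partial>M) -
          (\<Sum>c\<in>R. (\<integral>x. indicator (L c) x * fr x \<partial>M) * measure M (L c \<inter> X) / measure M (L c))\<bar>
     = \<bar>\<Sum>c\<in>R. ((\<integral>x. indicator (L c \<inter> X) x * fr x \<partial>M) -
          (\<integral>x. indicator (L c) x * fr x \<partial>M) * measure M (L c \<inter> X) / measure M (L c))\<bar>"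
    by (simp add: sum_subtractf)
  also have "\<dots> \<le> (\<Sum>c\<in>R. \<bar>(\<integral>x. indicator (L c \<inter> X) x * fr x \<partial>M) -
          (\<integral>x. indicator (L c) x * fr x \<partial>M) * measure M (L c \<inter> X) / measure M (L c)\<bar>)"
    by (rule sum_abs)
  also have "\<dots> \<le> (\<Sum>c\<in>R. 2 * (\<integral>x. indicator (L c) x * \<bar>fr x - c\<bar> \<partial>M))"
    by (rule sum_mono) (rule cell_bound[OF assms(1) Ls X assms(2)])
  also have "\<dots> = 2 * (\<integral>x. \<bar>fr x - s x\<bar> \<partial>M)" by (simp add: e2 sum_distrib_left)
  finally show ?thesis using e1 unfolding R_def[symmetric] L_def[symmetric] by simp
qed


lemma prob_measures_space: "M \<in> prob_measures \<Longrightarrow> space M = UNIV"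
  unfolding prob_measures_def by (auto dest: sets_eq_imp_space_eq)

lemma prob_measures_alg: "M \<in> prob_measures \<Longrightarrow> M \<in> space (prob_algebra borel)"
  unfolding prob_measures_def space_prob_algebra by auto

lemma distr_prob_measures:
  assumes "M \<in> prob_measures" "T \<in> borel_measurable borel"
  shows "distr M borel T \<in> prob_measures"
proof -
  have T: "T \<in> measurable M borel" using assms unfolding prob_measures_def
    by (auto cong: measurable_cong_sets)
  show ?thesis using assms(1) prob_space.prob_space_distr[OF _ T] unfolding prob_measures_def by auto
qed

lemma bind_prob_measures:
  assumes "M \<in> prob_measures" "Q \<in> kernels"
  shows "M \<bind> Q \<in> prob_measures"
proof -
  have Q: "Q \<in> borel \<rightarrow>\<^sub>M prob_algebra borel" using assms(2) unfolding kernels_def .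
  show ?thesis
    using prob_space_bind'[OF prob_measures_alg[OF assms(1)] Q] sets_bind'[OF prob_measures_alg[OF assms(1)] Q]
    unfolding prob_measures_def by auto
qed

lemma kernel_from_simple:
  fixes \<mu> \<nu> :: "'e::topological_space measure" and T :: "'e \<Rightarrow> 'f::topological_space"
    and s :: "'e \<Rightarrow> real"
  assumes mu: "\<mu> \<in> prob_measures" and nu: "\<nu> \<in> prob_measures" and ac: "absolutely_continuous \<mu> \<nu>"
    and Tm: "T \<in> borel_measurable borel" and fin: "finite (range s)"
    and lev: "\<And>c. s -` {c} \<in> sets (vimage_algebra UNIV T borel)"
  shows "\<exists>Q\<in>(kernels :: ('f \<Rightarrow> 'e measure) set). distr \<mu> borel T \<bind> Q = \<mu> \<and>
     (\<forall>X\<in>sets borel. measure (distr \<nu> borel T \<bind> Q) X =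
        (\<Sum>c\<in>range s. measure \<nu> (s -` {c}) * measure \<mu> (s -` {c} \<inter> X) / measure \<mu> (s -` {c})))"
proof -
  define L where "L c = s -` {c}" for c
  have "\<forall>c. \<exists>B\<in>sets (borel::'f measure). L c = T -` B"
  proof
    fix c
    have "L c \<in> {T -` A \<inter> UNIV | A. A \<in> sets (borel::'f measure)}"
      using lev[of c] sets_vimage_algebra2[of T UNIV "borel::'f measure"] by (simp add: L_def)
    then show "\<exists>B\<in>sets (borel::'f measure). L c = T -` B" by auto
  qed
  then obtain B where B: "\<And>c. B c \<in> sets (borel::'f measure)" "\<And>c. L c = T -` B c" by metis
  define g where "g y = (\<Sum>c\<in>range s. c * indicator (B c) y)" for y
  have gT: "g (T x) = s x" for x
  proof -
    have "g (T x) = (\<Sum>c\<in>range s. (if s x = c then c else 0))"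
      unfolding g_def
    proof (rule sum.cong[OF refl])
      fix c assume "c \<in> range s"
      have "T x \<in> B c \<longleftrightarrow> s x = c" using B(2)[of c] by (auto simp: L_def)
      then show "c * indicator (B c) (T x) = (if s x = c then c else 0)" by (auto split: split_indicator)
    qed
    also have "\<dots> = s x" using sum_level[OF fin, of s x "\<lambda>c. c"] by simp
    finally show ?thesis .
  qed
  have gm: "g \<in> borel_measurable borel" unfolding g_def using B(1) by measurable
  have gfin: "finite (range g)"
  proof (rule finite_subset)
    show "range g \<subseteq> (\<lambda>S. \<Sum>c\<in>S. c) ` Pow (range s)"
    proof
      fix z assume "z \<in> range g"
      then obtain y where z: "z = g y" by auto
      have "(\<Sum>c\<in>{c\<in>range s. y \<in> B c}. c) = (\<Sum>c\<in>range s. if y \<in> B c then c else 0)"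
        using fin by (rule sum.inter_filter)
      also have "\<dots> = g y" unfolding g_def by (rule sum.cong) (auto split: split_indicator)
      finally have "g y = (\<Sum>c\<in>{c\<in>range s. y \<in> B c}. c)" by simp
      then show "z \<in> (\<lambda>S. \<Sum>c\<in>S. c) ` Pow (range s)" using z by blast
    qed
  qed (use fin in auto)
  have gcount: "g \<in> measurable borel (count_space (range g))"
    unfolding measurable_count_space_eq2[OF gfin]
    using measurable_sets[OF gm, of "{a}" for a] by auto
  define P where "P c = (if emeasure \<mu> (L c) = 0 then \<mu> else uniform_measure \<mu> (L c))" for c
  have Lsets: "L c \<in> sets \<mu>" for c
    using B measurable_sets[OF Tm, of "B c"] mu unfolding prob_measures_def by auto
  have Psp: "P c \<in> space (prob_algebra borel)" for c
  proof (cases "emeasure \<mu> (L c) = 0")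
    case True then show ?thesis using prob_measures_alg[OF mu] by (simp add: P_def)
  next
    case False
    interpret prob_space \<mu> using mu unfolding prob_measures_def by auto
    have "prob_space (uniform_measure \<mu> (L c))"
      by (rule prob_space_uniform_measure) (use False in auto)
    then show ?thesis using False mu unfolding P_def space_prob_algebra prob_measures_def by auto
  qed
  define Q where "Q y = P (g y)" for y
  have Qk: "Q \<in> kernels" unfolding kernels_def Q_def
    by (rule measurable_compose_countable'[OF _ gcount]) (use Psp gfin in \<open>auto intro: countable_finite\<close>)
  have QT: "Q (T x) = P (s x)" for x by (simp add: Q_def gT)
  have bindc: "emeasure (distr M borel T \<bind> Q) X = (\<Sum>c\<in>range s. emeasure M (L c) * emeasure (P c) X)"
    if M: "M \<in> prob_measures" and X: "X \<in> sets borel" for M X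
  proof -
    have TM: "T \<in> measurable M borel" using M Tm unfolding prob_measures_def by (auto cong: measurable_cong_sets)
    have Qs: "Q \<in> measurable borel (subprob_algebra borel)"
      using Qk unfolding kernels_def by (rule measurable_prob_algebraD)
    have em: "(\<lambda>y. emeasure (Q y) X) \<in> borel_measurable borel"
      using measurable_emeasure_subprob_algebra[OF X] Qs by (rule measurable_compose[rotated])
    have "emeasure (distr M borel T \<bind> Q) X = (\<integral>\<^sup>+y. emeasure (Q y) X \<partial>distr M borel T)"
      by (rule emeasure_bind_prob_algebra[OF prob_measures_alg[OF distr_prob_measures[OF M Tm]] _ X])
        (use Qk in \<open>simp add: kernels_def\<close>)
    also have "\<dots> = (\<integral>\<^sup>+x. emeasure (P (s x)) X \<partial>M)"
      using em by (subst nn_integral_distr[OF TM]) (auto simp: QT cong: measurable_cong_sets)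
    also have "\<dots> = (\<integral>\<^sup>+x. (\<Sum>c\<in>range s. emeasure (P c) X * indicator (L c) x) \<partial>M)"
    proof (rule nn_integral_cong)
      fix x
      have "(\<Sum>c\<in>range s. emeasure (P c) X * indicator (L c) x) = (\<Sum>c\<in>range s. (if s x = c then emeasure (P c) X else 0))"
        by (rule sum.cong) (auto simp: L_def split: split_indicator)
      also have "\<dots> = emeasure (P (s x)) X" using sum_level[OF fin, of s x "\<lambda>c. emeasure (P c) X"] by simp
      finally show "emeasure (P (s x)) X = (\<Sum>c\<in>range s. emeasure (P c) X * indicator (L c) x)" by simp
    qed
    also have "\<dots> = (\<Sum>c\<in>range s. \<integral>\<^sup>+x. emeasure (P c) X * indicator (L c) x \<partial>M)"
      by (rule nn_integral_sum) (use Lsets M mu in \<open>auto simp: prob_measures_def\<close>)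
    also have "\<dots> = (\<Sum>c\<in>range s. emeasure M (L c) * emeasure (P c) X)"
      by (rule sum.cong[OF refl], subst nn_integral_cmult_indicator)
        (use Lsets M mu in \<open>auto simp: prob_measures_def mult.commute\<close>)
    finally show ?thesis .
  qed

  interpret MU: prob_space \<mu> using mu unfolding prob_measures_def by auto
  interpret NU: prob_space \<nu> using nu unfolding prob_measures_def by auto
  have smu: "sets \<mu> = sets borel" and snu: "sets \<nu> = sets borel" using mu nu unfolding prob_measures_def by auto
  have Lnull: "emeasure \<nu> (L c) = 0" if "emeasure \<mu> (L c) = 0" for c
  proof -
    have "L c \<in> null_sets \<mu>" using that Lsets by auto
    then have "L c \<in> null_sets \<nu>" using ac unfolding absolutely_continuous_def by auto
    then show ?thesis by auto
  qed
  have Pfin: "emeasure (P c) X < \<infinity>" for c X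
    using Psp[of c] prob_space.emeasure_le_1[of "P c" X] unfolding space_prob_algebra
    by (auto simp: top_unique intro: order.strict_trans1)
  have eq1: "distr \<mu> borel T \<bind> Q = \<mu>"
  proof (rule measure_eqI)
    show "sets (distr \<mu> borel T \<bind> Q) = sets \<mu>"
      using sets_bind'[OF prob_measures_alg[OF distr_prob_measures[OF mu Tm]]] Qk smu
      unfolding kernels_def by auto
    fix X assume "X \<in> sets (distr \<mu> borel T \<bind> Q)"
    then have X: "X \<in> sets borel"
      using sets_bind'[OF prob_measures_alg[OF distr_prob_measures[OF mu Tm]]] Qk
      unfolding kernels_def by auto
    have Xm: "X \<in> sets \<mu>" using X smu by simp
    have trm: "emeasure \<mu> (L c) * emeasure (P c) X = emeasure \<mu> (L c \<inter> X)" for c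
    proof (cases "emeasure \<mu> (L c) = 0")
      case True
      have "emeasure \<mu> (L c \<inter> X) \<le> emeasure \<mu> (L c)" by (rule emeasure_mono) (use Lsets in auto)
      then show ?thesis using True by simp
    next
      case False
      have "emeasure \<mu> (L c) * emeasure (P c) X = emeasure \<mu> (L c) * (emeasure \<mu> (L c \<inter> X) / emeasure \<mu> (L c))"
        using False Lsets Xm by (simp add: P_def)
      also have "\<dots> = emeasure \<mu> (L c \<inter> X)"
        using False by (simp add: ennreal_times_divide mult.commute[of "emeasure \<mu> (L c)"] ennreal_mult_divide_eq)
      finally show ?thesis .
    qed
    have "emeasure (distr \<mu> borel T \<bind> Q) X = (\<Sum>c\<in>range s. emeasure \<mu> (L c \<inter> X))"
      using bindc[OF mu X] trm by simp
    also have "\<dots> = emeasure \<mu> (\<Union>c\<in>range s. L c \<inter> X)"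
      by (rule sum_emeasure) (use Lsets Xm fin in \<open>auto simp: disjoint_family_on_def L_def\<close>)
    also have "(\<Union>c\<in>range s. L c \<inter> X) = X" by (auto simp: L_def)
    finally show "emeasure (distr \<mu> borel T \<bind> Q) X = emeasure \<mu> X" .
  qed
  have eq2: "measure (distr \<nu> borel T \<bind> Q) X =
        (\<Sum>c\<in>range s. measure \<nu> (s -` {c}) * measure \<mu> (s -` {c} \<inter> X) / measure \<mu> (s -` {c}))"
    if X: "X \<in> sets borel" for X
  proof -
    have Xm: "X \<in> sets \<mu>" using X smu by simp
    have "measure (distr \<nu> borel T \<bind> Q) X = enn2real (\<Sum>c\<in>range s. emeasure \<nu> (L c) * emeasure (P c) X)"
      unfolding measure_def bindc[OF nu X] ..
    also have "\<dots> = (\<Sum>c\<in>range s. enn2real (emeasure \<nu> (L c) * emeasure (P c) X))"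
      by (subst enn2real_sum) (use Pfin in \<open>auto simp: ennreal_mult_less_top NU.emeasure_eq_measure\<close>)
    also have "\<dots> = (\<Sum>c\<in>range s. measure \<nu> (L c) * measure \<mu> (L c \<inter> X) / measure \<mu> (L c))"
    proof (rule sum.cong[OF refl])
      fix c
      show "enn2real (emeasure \<nu> (L c) * emeasure (P c) X) = measure \<nu> (L c) * measure \<mu> (L c \<inter> X) / measure \<mu> (L c)"
      proof (cases "emeasure \<mu> (L c) = 0")
        case True
        then have "emeasure \<nu> (L c) = 0" by (rule Lnull)
        then show ?thesis by (simp add: measure_def)
      next
        case False
        then have pos: "measure \<mu> (L c) > 0" using MU.emeasure_eq_measure[of "L c"]
          by (simp add: zero_less_measure_iff)
        have "emeasure (P c) X = ennreal (measure \<mu> (L c \<inter> X) / measure \<mu> (L c))"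
          using False Lsets Xm pos by (simp add: P_def MU.emeasure_eq_measure divide_ennreal)
        then show ?thesis by (simp add: enn2real_mult measure_def[of \<nu>] mult.assoc)
      qed
    qed
    finally show ?thesis by (simp add: L_def)
  qed
  show ?thesis using Qk eq1 eq2 by blast
qed



lemma hard_direction:
  fixes \<alpha>E :: "'e::polish_space measure \<Rightarrow> 'e measure \<Rightarrow> ennreal"
    and \<alpha>F :: "'f::polish_space measure \<Rightarrow> 'f measure \<Rightarrow> ennreal"
    and \<mu> \<nu> :: "'e measure" and T :: "'e \<Rightarrow> 'f"
  assumes dE: "divergence_on \<alpha>E" and dp: "data_processing \<alpha>F \<alpha>E"
    and mu: "\<mu> \<in> prob_measures" and nu: "\<nu> \<in> prob_measures"
    and ac: "absolutely_continuous \<mu> \<nu>"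
    and Tm: "T \<in> borel_measurable borel"
    and suff: "sufficient_for T \<mu> \<nu>"
  shows "\<alpha>E \<nu> \<mu> \<le> \<alpha>F (distr \<nu> borel T) (distr \<mu> borel T)"
proof -
  interpret MU: prob_space \<mu> using mu unfolding prob_measures_def by auto
  interpret NU: prob_space \<nu> using nu unfolding prob_measures_def by auto
  have smu: "sets \<mu> = sets borel" and snu: "sets \<nu> = sets borel" using mu nu unfolding prob_measures_def by auto
  have spmu: "space \<mu> = UNIV" using prob_measures_space[OF mu] .
  define f where "f = RN_deriv \<mu> \<nu>"
  have fm: "f \<in> borel_measurable \<mu>" unfolding f_def by simp
  have dens: "density \<mu> f = \<nu>" unfolding f_def by (rule MU.density_RN_deriv[OF ac]) (simp add: smu snu)
  have ffin: "AE x in \<mu>. f x \<noteq> \<infinity>" unfolding f_def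
    by (rule MU.RN_deriv_finite[OF prob_space_imp_sigma_finite ac]) (use NU.prob_space_axioms smu snu in auto)
  define fr where "fr x = enn2real (f x)" for x
  have frm: "fr \<in> borel_measurable \<mu>" unfolding fr_def using fm by measurable
  have fr_eq: "AE x in \<mu>. ennreal (fr x) = f x" using ffin by eventually_elim (auto simp: fr_def less_top)
  have emnu: "emeasure \<nu> X = (\<integral>\<^sup>+x. ennreal (fr x) * indicator X x \<partial>\<mu>)" if "X \<in> sets \<mu>" for X
  proof -
    have "emeasure \<nu> X = (\<integral>\<^sup>+x. f x * indicator X x \<partial>\<mu>)"
      using that fm by (simp add: dens[symmetric] emeasure_density)
    also have "\<dots> = (\<integral>\<^sup>+x. ennreal (fr x) * indicator X x \<partial>\<mu>)"
      by (rule nn_integral_cong_AE) (use fr_eq in eventually_elim, auto)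
    finally show ?thesis .
  qed
  have frint: "integrable \<mu> fr"
  proof (rule integrableI_nonneg[OF frm])
    show "AE x in \<mu>. 0 \<le> fr x" by (simp add: fr_def)
    have "(\<integral>\<^sup>+x. ennreal (fr x) \<partial>\<mu>) = (\<integral>\<^sup>+x. ennreal (fr x) * indicator (space \<mu>) x \<partial>\<mu>)"
      by (rule nn_integral_cong) simp
    also have "\<dots> = emeasure \<nu> (space \<mu>)" by (rule emnu[symmetric]) simp
    finally show "(\<integral>\<^sup>+x. ennreal (fr x) \<partial>\<mu>) < \<infinity>" using NU.emeasure_finite[of "space \<mu>"]
      by (simp add: less_top[symmetric])
  qed
  have msnu: "measure \<nu> X = (\<integral>x. indicator X x * fr x \<partial>\<mu>)" if "X \<in> sets \<mu>" for X
  proof -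
    have "(\<integral>x. indicator X x * fr x \<partial>\<mu>) = enn2real (\<integral>\<^sup>+x. ennreal (indicator X x * fr x) \<partial>\<mu>)"
    proof (rule integral_eq_nn_integral)
      show "(\<lambda>x. indicator X x * fr x) \<in> borel_measurable \<mu>"
        using borel_measurable_indicator[OF that] frm by (rule borel_measurable_times)
    qed (auto simp: fr_def)
    also have "(\<integral>\<^sup>+x. ennreal (indicator X x * fr x) \<partial>\<mu>) = emeasure \<nu> X"
      unfolding emnu[OF that] by (rule nn_integral_cong) (auto split: split_indicator)
    finally show ?thesis by (simp add: measure_def)
  qed

  define V where "V = vimage_algebra UNIV T (borel :: 'f measure)"
  from suff obtain h where hm: "h \<in> borel_measurable V" and hae: "AE x in \<mu>. f x = h x"
    unfolding sufficient_for_def V_def f_def by blast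
  have setsV: "sets V \<subseteq> sets \<mu>"
  proof
    fix A assume "A \<in> sets V"
    then obtain B where "B \<in> sets (borel::'f measure)" "A = T -` B \<inter> UNIV"
      using sets_vimage_algebra2[of T UNIV "borel::'f measure"] unfolding V_def by auto
    then show "A \<in> sets \<mu>" using measurable_sets[OF Tm] smu by auto
  qed
  have sub: "subalgebra \<mu> V" unfolding subalgebra_def using setsV spmu by (simp add: V_def)
  define hr where "hr x = enn2real (h x)" for x
  have hrm: "hr \<in> borel_measurable V" unfolding hr_def using hm by measurable
  have hr_ae: "AE x in \<mu>. fr x = hr x" using hae by eventually_elim (simp add: fr_def hr_def)
  have hrint: "integrable \<mu> hr"
    using frint measurable_from_subalg[OF sub hrm] hr_ae by (rule integrable_cong_AE_imp)
  define M' where "M' = restr_to_subalg \<mu> V"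
  have hrint': "integrable M' hr" unfolding M'_def by (rule integrable_in_subalg[OF sub hrm hrint])
  then have "has_bochner_integral M' hr (integral\<^sup>L M' hr)" by (rule has_bochner_integral_integrable)
  then obtain s where s_simple: "\<And>i. Bochner_Integration.simple_bochner_integrable M' (s i)"
    and s_lim: "(\<lambda>i. \<integral>\<^sup>+x. norm (hr x - s i x) \<partial>M') \<longlonglongrightarrow> 0"
    by (cases rule: has_bochner_integral.cases) blast
  have spM': "space M' = UNIV" unfolding M'_def space_restr_to_subalg spmu ..
  have setsM': "sets M' = sets V" unfolding M'_def by (rule sets_restr_to_subalg[OF sub])
  have sf: "simple_function M' (s i)" for i using s_simple[of i] by (auto elim: Bochner_Integration.simple_bochner_integrable.cases)
  have sfin: "finite (range (s i))" for i using sf[of i] spM' unfolding simple_function_def by simp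
  have slev: "s i -` {c} \<in> sets V" for i c
  proof (cases "c \<in> range (s i)")
    case True
    then show ?thesis using sf[of i] spM' setsM' unfolding simple_function_def by auto
  next
    case False
    then have "s i -` {c} = {}" by auto
    then show ?thesis by simp
  qed
  have smV: "s i \<in> borel_measurable V" for i
    using borel_measurable_simple_function[OF sf[of i]] setsM' by (simp cong: measurable_cong_sets)
  have smu_m: "s i \<in> borel_measurable \<mu>" for i by (rule measurable_from_subalg[OF sub smV])
  have sint: "integrable \<mu> (s i)" for i
  proof -
    have "integrable M' (s i)"
      using has_bochner_integral_simple_bochner_integrable[OF s_simple[of i]] by (auto simp: integrable.simps)
    then show ?thesis unfolding M'_def by (rule integrable_from_subalg[OF sub])
  qed
  define e where "e i = (\<integral>x. \<bar>fr x - s i x\<bar> \<partial>\<mu>)" for i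
  have e_nn: "e i = enn2real (\<integral>\<^sup>+x. norm (hr x - s i x) \<partial>M')" for i
  proof -
    have "e i = enn2real (\<integral>\<^sup>+x. ennreal \<bar>fr x - s i x\<bar> \<partial>\<mu>)"
      unfolding e_def by (rule integral_eq_nn_integral) (use frm smu_m in auto)
    also have "(\<integral>\<^sup>+x. ennreal \<bar>fr x - s i x\<bar> \<partial>\<mu>) = (\<integral>\<^sup>+x. norm (hr x - s i x) \<partial>\<mu>)"
      by (rule nn_integral_cong_AE) (use hr_ae in eventually_elim, simp)
    also have "\<dots> = (\<integral>\<^sup>+x. norm (hr x - s i x) \<partial>M')"
      unfolding M'_def by (rule nn_integral_subalgebra2[OF sub, symmetric]) (use hrm smV in measurable)
    finally show ?thesis .
  qed
  have e_lim: "e \<longlonglongrightarrow> 0"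
    unfolding e_nn using tendsto_enn2real[of _ 0] s_lim by simp

  have "\<forall>i. \<exists>Q\<in>(kernels :: ('f \<Rightarrow> 'e measure) set). distr \<mu> borel T \<bind> Q = \<mu> \<and>
     (\<forall>X\<in>sets borel. measure (distr \<nu> borel T \<bind> Q) X =
        (\<Sum>c\<in>range (s i). measure \<nu> (s i -` {c}) * measure \<mu> (s i -` {c} \<inter> X) / measure \<mu> (s i -` {c})))"
  proof
    fix i
    show "\<exists>Q\<in>(kernels :: ('f \<Rightarrow> 'e measure) set). distr \<mu> borel T \<bind> Q = \<mu> \<and>
     (\<forall>X\<in>sets borel. measure (distr \<nu> borel T \<bind> Q) X =
        (\<Sum>c\<in>range (s i). measure \<nu> (s i -` {c}) * measure \<mu> (s i -` {c} \<inter> X) / measure \<mu> (s i -` {c})))"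
      by (rule kernel_from_simple[OF mu nu ac Tm sfin]) (use slev in \<open>simp add: V_def\<close>)
  qed
  then have "\<forall>i. \<exists>Q. Q \<in> (kernels :: ('f \<Rightarrow> 'e measure) set) \<and> distr \<mu> borel T \<bind> Q = \<mu> \<and>
     (\<forall>X\<in>sets borel. measure (distr \<nu> borel T \<bind> Q) X =
        (\<Sum>c\<in>range (s i). measure \<nu> (s i -` {c}) * measure \<mu> (s i -` {c} \<inter> X) / measure \<mu> (s i -` {c})))"
    by (simp add: Bex_def)
  from choice[OF this] obtain Q where Q: "\<forall>i. Q i \<in> (kernels :: ('f \<Rightarrow> 'e measure) set) \<and> distr \<mu> borel T \<bind> Q i = \<mu> \<and>
     (\<forall>X\<in>sets borel. measure (distr \<nu> borel T \<bind> Q i) X =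
        (\<Sum>c\<in>range (s i). measure \<nu> (s i -` {c}) * measure \<mu> (s i -` {c} \<inter> X) / measure \<mu> (s i -` {c})))"
    by blast
  have Qk: "\<And>i. Q i \<in> (kernels :: ('f \<Rightarrow> 'e measure) set)" using Q by blast
  have Qmu: "\<And>i. distr \<mu> borel T \<bind> Q i = \<mu>" using Q by blast
  have Qnu: "\<And>i X. X \<in> sets borel \<Longrightarrow> measure (distr \<nu> borel T \<bind> Q i) X =
        (\<Sum>c\<in>range (s i). measure \<nu> (s i -` {c}) * measure \<mu> (s i -` {c} \<inter> X) / measure \<mu> (s i -` {c}))"
    using Q by blast
  define \<nu>s where "\<nu>s i = distr \<nu> borel T \<bind> Q i" for i
  have muT: "distr \<mu> borel T \<in> prob_measures" and nuT: "distr \<nu> borel T \<in> prob_measures"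
    using distr_prob_measures[OF mu Tm] distr_prob_measures[OF nu Tm] .
  have nusPM: "\<nu>s i \<in> prob_measures" for i unfolding \<nu>s_def by (rule bind_prob_measures[OF nuT Qk])
  have pw: "\<bar>measure (\<nu>s i) A - measure \<nu> A\<bar> \<le> 2 * e i" if A: "A \<in> sets borel" for i A
  proof -
    have Am: "A \<in> sets \<mu>" using A smu by simp
    have levm: "s i -` {c} \<in> sets \<mu>" for c using slev setsV by auto
    have tb: "\<bar>(\<integral>x. indicator A x * fr x \<partial>\<mu>) -
          (\<Sum>c\<in>range (s i). (\<integral>x. indicator (s i -` {c}) x * fr x \<partial>\<mu>)
              * measure \<mu> (s i -` {c} \<inter> A) / measure \<mu> (s i -` {c}))\<bar> \<le> 2 * e i"
      using tv_bound[OF MU.prob_space_axioms frint, of "s i" A] levm Am sfin[of i] spmu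
      by (simp add: e_def)
    have "\<bar>measure \<nu> A - measure (\<nu>s i) A\<bar> \<le> 2 * e i"
      using tb unfolding \<nu>s_def Qnu[OF A] msnu[OF Am] msnu[OF levm, symmetric] .
    then show ?thesis by (simp add: abs_minus_commute)
  qed
  have tvb: "tv_dist (\<nu>s i) \<nu> \<le> 2 * e i" for i
    unfolding tv_dist_def by (rule cSUP_least) (use pw in auto)
  have tv0: "0 \<le> tv_dist (\<nu>s i) \<nu>" for i
    unfolding tv_dist_def
    by (rule cSUP_upper2[of _ _ "{}"]) (use pw in \<open>auto simp: bdd_above_def\<close>)
  have tvlim: "(\<lambda>i. tv_dist (\<nu>s i) \<nu>) \<longlonglongrightarrow> 0"
  proof (rule tendsto_sandwich[of "\<lambda>_. 0" _ _ "\<lambda>i. 2 * e i"])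
    show "(\<lambda>i. 2 * e i) \<longlonglongrightarrow> 0" using tendsto_mult_right_zero[OF e_lim, of 2] by (simp add: mult.commute)
  qed (use tv0 tvb in auto)
  have lsc: "\<alpha>E \<nu> \<mu> \<le> liminf (\<lambda>n. \<alpha>E (\<nu>s n) \<mu>)"
    using dE mu nu nusPM tvlim unfolding divergence_on_def by blast
  have bnd: "\<alpha>E (\<nu>s n) \<mu> \<le> \<alpha>F (distr \<nu> borel T) (distr \<mu> borel T)" for n
  proof -
    have "\<alpha>E (\<nu>s n) \<mu> = \<alpha>E (distr \<nu> borel T \<bind> Q n) (distr \<mu> borel T \<bind> Q n)"
      by (simp add: \<nu>s_def Qmu)
    also have "\<dots> \<le> \<alpha>F (distr \<nu> borel T) (distr \<mu> borel T)"
      using dp muT nuT Qk unfolding data_processing_def by blast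
    finally show ?thesis .
  qed
  have "liminf (\<lambda>n. \<alpha>E (\<nu>s n) \<mu>) \<le> \<alpha>F (distr \<nu> borel T) (distr \<mu> borel T)"
    by (rule Liminf_le) (use bnd in auto)
  then show ?thesis using lsc by (rule order_trans[rotated])
qed


theorem proposition4p3:
  fixes \<alpha>E :: "'e::polish_space measure \<Rightarrow> 'e measure \<Rightarrow> ennreal"
    and \<alpha>F :: "'f::polish_space measure \<Rightarrow> 'f measure \<Rightarrow> ennreal"
    and \<mu> \<nu> :: "'e measure"
    and T :: "'e \<Rightarrow> 'f"
  assumes "divergence_pair \<alpha>E \<alpha>F"
    and "\<mu> \<in> prob_measures" and "\<nu> \<in> prob_measures"
    and "absolutely_continuous \<mu> \<nu>"
    and "T \<in> borel_measurable borel"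
  shows "(sufficient_for T \<mu> \<nu> \<longrightarrow>
            \<alpha>F (distr \<nu> borel T) (distr \<mu> borel T) = \<alpha>E \<nu> \<mu>)
       \<and> (bij T \<and> inv T \<in> borel_measurable borel \<longrightarrow>
            \<alpha>F (distr \<nu> borel T) (distr \<mu> borel T) = \<alpha>E \<nu> \<mu>)"
proof -
  note mu = assms(2) and nu = assms(3) and ac = assms(4) and Tm = assms(5)
  have dE: "divergence_on \<alpha>E" and dpEF: "data_processing \<alpha>E \<alpha>F" and dpFE: "data_processing \<alpha>F \<alpha>E"
    using assms(1) unfolding divergence_pair_def by auto
  have smu: "sets \<mu> = sets borel" and snu: "sets \<nu> = sets borel" using mu nu unfolding prob_measures_def by auto
  define K where "K x = return borel (T x)" for x
  have Kk: "K \<in> (kernels :: ('e \<Rightarrow> 'f measure) set)" unfolding kernels_def K_def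
    by (rule measurable_compose[OF Tm measurable_return_prob_space])
  have bK: "M \<bind> K = distr M borel T" if M: "M \<in> prob_measures" for M
  proof -
    have "T \<in> measurable M borel" using M Tm unfolding prob_measures_def by (auto cong: measurable_cong_sets)
    then show ?thesis unfolding K_def using prob_measures_space[OF M] by (intro bind_return_distr') auto
  qed
  have easy: "\<alpha>F (distr \<nu> borel T) (distr \<mu> borel T) \<le> \<alpha>E \<nu> \<mu>"
    using dpEF mu nu Kk unfolding data_processing_def bK[OF mu, symmetric] bK[OF nu, symmetric] by blast
  have suffc: "\<alpha>F (distr \<nu> borel T) (distr \<mu> borel T) = \<alpha>E \<nu> \<mu>" if "sufficient_for T \<mu> \<nu>"
    using easy hard_direction[OF dE dpFE mu nu ac Tm that] by (rule antisym)
  have bijs: "sufficient_for T \<mu> \<nu>" if b: "bij T" and im: "inv T \<in> borel_measurable borel"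
  proof -
    have R: "RN_deriv \<mu> \<nu> \<in> borel_measurable borel"
      using borel_measurable_RN_deriv[of \<mu> \<nu>] smu by (simp cong: measurable_cong_sets)
    have g: "(\<lambda>y. RN_deriv \<mu> \<nu> (inv T y)) \<in> borel_measurable borel"
      by (rule measurable_compose[OF im R])
    have TV: "T \<in> measurable (vimage_algebra UNIV T borel) borel"
      by (rule measurable_vimage_algebra1) simp
    have "(\<lambda>x. RN_deriv \<mu> \<nu> (inv T (T x))) \<in> borel_measurable (vimage_algebra UNIV T borel)"
      using measurable_compose[OF TV g] by simp
    moreover have "inv T (T x) = x" for x using b by (simp add: bij_is_inj)
    ultimately show ?thesis unfolding sufficient_for_def by auto
  qed
  show ?thesis using suffc bijs by blast
qed

end
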